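(* Let $G$ be a chordal graph and $X\subseteq V(G)$ a clique, and let $L_1,\dots,L_t$ be the evaporation sequence of $G$ with exception set $X$. If $G\setminus X$ is connected, then $L_t$ is a clique (where $L_t=\emptyset$ if $t=0$).
   Context: A vertex is simplicial if its neighborhood is a clique. For a chordal graph $G$ and a clique $X\subseteq V(G)$ (possibly empty), the evaporation sequence of $G$ with exception set $X$ is defined recursively: if $X=V(G)$ it is the empty sequence; otherwise let $L_1$ be the set of simplicial vertices of $G$ that are not in $X$ (this set is always nonempty), and the evaporation sequence is $L_1$ followed by the evaporation sequence of $G-L_1$ with exception set $X$. If the sequence is $L_1,\dots,L_t$ we say $G$ evaporates at time $t$ with exception set $X$. *)

theory Defs
  imports Main
begin

text \<open>A finite simple graph is given by a finite vertex set V and a symmetric,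
irreflexive adjacency relation E.  Subgraphs are always induced subgraphs,
given by a vertex subset S.\<close>

definition simple_graph :: "'a set \<Rightarrow> ('a \<Rightarrow> 'a \<Rightarrow> bool) \<Rightarrow> bool" where
  "simple_graph V E \<longleftrightarrow> finite V \<and> (\<forall>u v. E u v \<longrightarrow> E v u) \<and> (\<forall>v. \<not> E v v)
     \<and> (\<forall>u v. E u v \<longrightarrow> u \<in> V \<and> v \<in> V)"

definition is_clique :: "('a \<Rightarrow> 'a \<Rightarrow> bool) \<Rightarrow> 'a set \<Rightarrow> bool" where
  "is_clique E K \<longleftrightarrow> (\<forall>u\<in>K. \<forall>v\<in>K. u \<noteq> v \<longrightarrow> E u v)"

definition is_long_cycle :: "'a set \<Rightarrow> ('a \<Rightarrow> 'a \<Rightarrow> bool) \<Rightarrow> 'a list \<Rightarrow> bool" where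
  "is_long_cycle V E cs \<longleftrightarrow> distinct cs \<and> length cs \<ge> 4 \<and> set cs \<subseteq> V \<and>
     (\<forall>i < length cs. E (cs ! i) (cs ! ((i + 1) mod length cs)))"

definition has_chord :: "('a \<Rightarrow> 'a \<Rightarrow> bool) \<Rightarrow> 'a list \<Rightarrow> bool" where
  "has_chord E cs \<longleftrightarrow> (\<exists>i < length cs. \<exists>j < length cs. i \<noteq> j \<and>
     j \<noteq> (i + 1) mod length cs \<and> i \<noteq> (j + 1) mod length cs \<and> E (cs ! i) (cs ! j))"

definition chordal :: "'a set \<Rightarrow> ('a \<Rightarrow> 'a \<Rightarrow> bool) \<Rightarrow> bool" where
  "chordal V E \<longleftrightarrow> simple_graph V E \<and> (\<forall>cs. is_long_cycle V E cs \<longrightarrow> has_chord E cs)"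

text \<open>Connectedness of the induced subgraph on S (the empty graph counts as connected).\<close>
definition connected_on :: "('a \<Rightarrow> 'a \<Rightarrow> bool) \<Rightarrow> 'a set \<Rightarrow> bool" where
  "connected_on E S \<longleftrightarrow> (\<forall>u\<in>S. \<forall>v\<in>S. \<exists>p. p \<noteq> [] \<and> hd p = u \<and> last p = v \<and>
     set p \<subseteq> S \<and> (\<forall>i. Suc i < length p \<longrightarrow> E (p ! i) (p ! Suc i)))"

definition simplicial :: "('a \<Rightarrow> 'a \<Rightarrow> bool) \<Rightarrow> 'a set \<Rightarrow> 'a \<Rightarrow> bool" where
  "simplicial E S v \<longleftrightarrow> v \<in> S \<and> is_clique E {u \<in> S. E v u}"

text \<open>Evaporation sequence of the induced subgraph on S with exception set X:
  evap_seq E X S Ls means Ls = [L_1,...,L_t].\<close>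
inductive evap_seq :: "('a \<Rightarrow> 'a \<Rightarrow> bool) \<Rightarrow> 'a set \<Rightarrow> 'a set \<Rightarrow> 'a set list \<Rightarrow> bool"
  for E X where
  evap_done: "S = X \<Longrightarrow> evap_seq E X S []"
| evap_step: "S \<noteq> X \<Longrightarrow> L = {v \<in> S - X. simplicial E S v} \<Longrightarrow>
     evap_seq E X (S - L) Ls \<Longrightarrow> evap_seq E X S (L # Ls)"

end

theory Submission
  imports Defs
begin

fun wlk :: "('a \<Rightarrow> 'a \<Rightarrow> bool) \<Rightarrow> 'a set \<Rightarrow> 'a list \<Rightarrow> bool" where
  "wlk E T [] = False"
| "wlk E T [x] = (x \<in> T)"
| "wlk E T (x # y # r) = (x \<in> T \<and> E x y \<and> wlk E T (y # r))"

lemma wlk_iff: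
  "wlk E T p \<longleftrightarrow> p \<noteq> [] \<and> set p \<subseteq> T \<and> (\<forall>i. Suc i < length p \<longrightarrow> E (p ! i) (p ! Suc i))"
proof (induction E T p rule: wlk.induct)
  case (3 E T x y r)
  have "(\<forall>i. Suc i < length (x # y # r) \<longrightarrow> E ((x # y # r) ! i) ((x # y # r) ! Suc i))
     \<longleftrightarrow> E x y \<and> (\<forall>i. Suc i < length (y # r) \<longrightarrow> E ((y # r) ! i) ((y # r) ! Suc i))"
    (is "?A \<longleftrightarrow> ?B")
  proof
    assume ?A
    then show ?B by (metis Suc_less_eq length_Cons nth_Cons_0 nth_Cons_Suc zero_less_Suc)
  next
    assume b: ?B
    show ?A
    proof (intro allI impI)
      fix i assume "Suc i < length (x # y # r)"
      then show "E ((x # y # r) ! i) ((x # y # r) ! Suc i)"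
        using b by (cases i) auto
    qed
  qed
  then show ?case using 3 by auto
qed auto

lemma wlk_mono: "wlk E T p \<Longrightarrow> set p \<subseteq> T' \<Longrightarrow> wlk E T' p"
  by (induction E T p rule: wlk.induct) auto

lemma wlk_append: "wlk E T (xs @ y # ys) \<longleftrightarrow> wlk E T (xs @ [y]) \<and> wlk E T (y # ys)"
proof (induction xs)
  case Nil
  then show ?case by (cases ys) auto
next
  case (Cons a xs)
  then show ?case by (cases xs) auto
qed

lemma wlk_set: "wlk E T p \<Longrightarrow> set p \<subseteq> T"
  using wlk_iff by metis

lemma shortcut_clique:
  assumes "wlk E T p" "\<forall>v\<in>T. simplicial E S v" "T \<subseteq> S" "\<forall>u v. E u v \<longrightarrow> E v u"
  shows "hd p = last p \<or> E (hd p) (last p)"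
  using assms
proof (induction "length p" arbitrary: p rule: less_induct)
  case less
  show ?case
  proof (cases p)
    case Nil then show ?thesis using less by simp
  next
    case (Cons u r)
    show ?thesis
    proof (cases r)
      case Nil then show ?thesis using Cons by simp
    next
      case (Cons s r2)
      note p = \<open>p = u # r\<close> Cons
      show ?thesis
      proof (cases r2)
        case Nil then show ?thesis using p less by simp
      next
        case (Cons b ys)
        have w: "wlk E T (u # s # b # ys)" using less p Cons by simp
        hence h: "u \<in> T" "E u s" "s \<in> T" "E s b" "b \<in> T" "wlk E T (b # ys)" by (auto dest: wlk_set)
        have "E s u" using h less by blast
        have cl: "is_clique E {x \<in> S. E s x}" using less h unfolding simplicial_def by blast
        show ?thesis
        proof (cases "u = b")
          case True
          have "wlk E T (u # ys)" using True h by simp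
          moreover have "length (u # ys) < length p" using p Cons by simp
          ultimately have "hd (u#ys) = last (u#ys) \<or> E (hd (u#ys)) (last (u#ys))"
            using less by blast
          then show ?thesis using p Cons True by (cases ys) auto
        next
          case False
          have "E u b" using cl False h \<open>E s u\<close> less(4) unfolding is_clique_def by blast
          hence "wlk E T (u # b # ys)" using h by simp
          moreover have "length (u # b # ys) < length p" using p Cons by simp
          ultimately have "hd (u#b#ys) = last (u#b#ys) \<or> E (hd (u#b#ys)) (last (u#b#ys))"
            using less by blast
          then show ?thesis using p Cons by simp
        qed
      qed
    qed
  qed
qed

lemma shortcut_remove:
  assumes "wlk E T p" "hd p \<notin> L" "last p \<notin> L"
    "\<forall>v\<in>L. simplicial E S v" "T \<subseteq> S" "\<forall>u v. E u v \<longrightarrow> E v u"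
  shows "\<exists>q. wlk E (T - L) q \<and> hd q = hd p \<and> last q = last p"
  using assms
proof (induction "length p" arbitrary: p rule: less_induct)
  case less
  show ?case
  proof (cases "\<exists>s\<in>set p. s \<in> L")
    case False
    then show ?thesis using less wlk_mono[of E T p "T - L"] wlk_set[of E T p] by blast
  next
    case True
    then obtain s where s: "s \<in> set p" "s \<in> L" by blast
    then obtain as bs where pe: "p = as @ s # bs" by (meson split_list)
    have "as \<noteq> []" using pe less(3) s by auto
    then obtain xs a where as: "as = xs @ [a]" by (metis rev_exhaust)
    have "bs \<noteq> []" using pe less(4) s by auto
    then obtain b ys where bs: "bs = b # ys" by (cases bs) auto
    have pe2: "p = xs @ a # s # b # ys" using pe as bs by simp
    have w: "wlk E T (xs @ [a])" "wlk E T (a # s # b # ys)"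
      using less(2) pe2 wlk_append[of E T xs a "s # b # ys"] by auto
    hence h: "a \<in> T" "E a s" "s \<in> T" "E s b" "b \<in> T" "wlk E T (b # ys)" by (auto dest: wlk_set)
    have "E s a" using h less by blast
    have cl: "is_clique E {x \<in> S. E s x}" using less s unfolding simplicial_def by blast
    define p' where "p' = (if a = b then xs @ b # ys else xs @ a # b # ys)"
    have wp: "wlk E T p'"
    proof (cases "a = b")
      case True
      then show ?thesis unfolding p'_def using w h wlk_append[of E T xs b ys] by simp
    next
      case False
      have "E a b" using cl False h \<open>E s a\<close> less(6) less(7) unfolding is_clique_def by blast
      then show ?thesis unfolding p'_def using False w h wlk_append[of E T xs a "b # ys"] by simp
    qed
    have "length p' < length p" unfolding p'_def pe2 by simp
    moreover have "hd p' = hd p" "last p' = last p" unfolding p'_def pe2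
      by (auto simp: hd_append)
    ultimately show ?thesis using less wp by metis
  qed
qed

lemma connected_wlk: "connected_on E S \<longleftrightarrow> (\<forall>u\<in>S. \<forall>v\<in>S. \<exists>p. wlk E S p \<and> hd p = u \<and> last p = v)"
  unfolding connected_on_def wlk_iff by blast

lemma main_ind:
  assumes "evap_seq E X S Ls" "X \<subseteq> S" "connected_on E (S - X)" "\<forall>u v. E u v \<longrightarrow> E v u"
  shows "is_clique E (if Ls = [] then {} else last Ls)"
  using assms
proof (induction S Ls rule: evap_seq.induct)
  case (evap_done S)
  then show ?case by (simp add: is_clique_def)
next
  case (evap_step S L Ls)
  show ?case
  proof (cases "Ls = []")
    case True
    have "S - L = X" using evap_step(3) True by (cases rule: evap_seq.cases) auto
    hence LS: "L = S - X" using evap_step(2,5) by auto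
    have "is_clique E L" unfolding is_clique_def
    proof (intro ballI impI)
      fix u v assume uv: "u \<in> L" "v \<in> L" "u \<noteq> v"
      then obtain p where "wlk E L p" "hd p = u" "last p = v"
        using evap_step(6) LS connected_wlk by metis
      moreover have "\<forall>x\<in>L. simplicial E S x" using evap_step(2) by auto
      ultimately show "E u v" using shortcut_clique[of E L p S] uv evap_step(7) LS by auto
    qed
    then show ?thesis using True by simp
  next
    case False
    have "connected_on E (S - L - X)" unfolding connected_wlk
    proof (intro ballI)
      fix u v assume uv: "u \<in> S - L - X" "v \<in> S - L - X"
      then obtain p where p: "wlk E (S - X) p" "hd p = u" "last p = v"
        using evap_step(6) connected_wlk by (metis DiffD1 DiffD2 DiffI)
      have "\<forall>x\<in>L. simplicial E S x" using evap_step(2) by auto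
      then obtain q where "wlk E (S - X - L) q" "hd q = u" "last q = v"
        using shortcut_remove[of E "S - X" p L S] p uv evap_step(7) by auto
      moreover have "S - X - L = S - L - X" by blast
      ultimately show "\<exists>q. wlk E (S - L - X) q \<and> hd q = u \<and> last q = v" by metis
    qed
    moreover have "X \<subseteq> S - L" using evap_step(2,5) by auto
    ultimately have "is_clique E (if Ls = [] then {} else last Ls)"
      using evap_step(4) evap_step(7) by blast
    then show ?thesis using False by simp
  qed
qed

theorem mainTheorem5:
  fixes V :: "'a set" and E :: "'a \<Rightarrow> 'a \<Rightarrow> bool" and X :: "'a set" and Ls :: "'a set list"
  assumes "chordal V E"
    and "X \<subseteq> V" and "is_clique E X"
    and "evap_seq E X V Ls"
    and "connected_on E (V - X)"
  shows "is_clique E (if Ls = [] then {} else last Ls)"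
  using main_ind[OF assms(4,2,5)] assms(1) unfolding chordal_def simple_graph_def by blast

end
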